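(* Let $\varPhi\subset\mathbb{E}^3$ be a skew ruled surface with invariants $\delta,\kappa,\lambda$, right normalized with support function $q=\frac{f(u)+g(u)v}{w}$, neither $f$ nor $g$ the zero function. Then the Tchebychev vector field $\overline{T}$ is tangential to the curved asymptotic lines of $\varPhi$ if and only if $\varPhi$ is conoidal, $g$ is a nonvanishing constant $c_1$, and $f=|\delta|^{1/2}\left(\frac{c_1}{2}\int|\delta|^{1/2}\lambda\,\mathrm{d}u+c_2\right)$, $c_2\in\mathbb{R}$.
   Context: $\varPhi$ is a ruled $C^r$-surface ($r\ge3$) with nonvanishing Gaussian curvature, in standard parameters $\overline{x}(u,v)=\overline{s}(u)+v\,\overline{e}(u)$, $|\overline{e}|=|\overline{e}'|=1$, $\langle\overline{s}',\overline{e}'\rangle=0$. Frame $\overline{n}=\overline{e}'$, $\overline{z}=\overline{e}\times\overline{n}$. Invariants: $\delta=(\overline{s}',\overline{e},\overline{e}')\neq0$, $\kappa=(\overline{e},\overline{e}',\overline{e}'')$, $\lambda=\cot\sphericalangle(\overline{e},\overline{s}')$, $\overline{s}'=\delta\lambda\overline{e}+\delta\overline{z}$. Conoidal means $\kappa\equiv0$. $w=\sqrt{\delta^2+v^2}$, $\overline{\xi}=(\delta\overline{n}-v\overline{z})/w$. $h_{11}=-(\kappa w^2+\delta'v-\delta^2\lambda)/w$, $h_{12}=\delta/w$, $h_{22}=0$. The curved asymptotic lines are the curves $v=v(u)$ satisfying $\kappa v^2+\delta'v+\delta^2(\kappa-\lambda)-2\delta v'=0$. A relative normalization is determined by its support function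 $q=\langle\overline{\xi},\overline{y}\rangle\neq0$; right normalization: $q=(f+gv)/w$, $f,g$ functions of $u$. Relative metric $G_{ij}=q^{-1}h_{ij}$, Darboux tensor $A_{ijk}=q^{-1}\langle\overline{\xi},\nabla^G_k\nabla^G_j\overline{x}_{/i}\rangle$, Tchebychev vector $\overline{T}=T^m\overline{x}_{/m}$, $T^m=\frac12A_i^{\ im}$; equivalently $T^1=\frac{w^2q_{/2}+vq}{\delta w}$, $T^2=\frac{2\delta w^2q_{/1}+\delta'q(\delta^2-v^2)}{2\delta^2w}+\frac{T^1(\kappa w^2+\delta'v-\delta^2\lambda)}{\delta}$. "Tangential to a family of curves" means at every point $\overline{T}$ is parallel to the tangent of the curve of the family through that point. $\int\cdots\mathrm{d}u$ denotes an antiderivative. *)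

theory Defs
  imports "HOL-Analysis.Analysis"
begin

text \<open>A ruled surface x(u,v) = s(u) + v e(u), u in an open interval I.
  The functions s1,s2,s3 (resp. e1,e2,e3) are the first three derivatives of s (resp. e).\<close>

definition standard_ruled ::
  "(real \<Rightarrow> real^3) \<Rightarrow> (real \<Rightarrow> real^3) \<Rightarrow> (real \<Rightarrow> real^3) \<Rightarrow> (real \<Rightarrow> real^3) \<Rightarrow>
   (real \<Rightarrow> real^3) \<Rightarrow> (real \<Rightarrow> real^3) \<Rightarrow> (real \<Rightarrow> real^3) \<Rightarrow> (real \<Rightarrow> real^3) \<Rightarrow>
   real set \<Rightarrow> bool" where
  "standard_ruled s s1 s2 s3 e e1 e2 e3 I \<longleftrightarrow>
     open I \<and> is_interval I \<and> I \<noteq> {} \<and>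
     (\<forall>u\<in>I. (s has_vector_derivative s1 u) (at u) \<and> (s1 has_vector_derivative s2 u) (at u) \<and>
             (s2 has_vector_derivative s3 u) (at u) \<and>
             (e has_vector_derivative e1 u) (at u) \<and> (e1 has_vector_derivative e2 u) (at u) \<and>
             (e2 has_vector_derivative e3 u) (at u)) \<and>
     continuous_on I s3 \<and> continuous_on I e3 \<and>
     (\<forall>u\<in>I. norm (e u) = 1 \<and> norm (e1 u) = 1 \<and> s1 u \<bullet> e1 u = 0)"

definition rs_delta :: "(real \<Rightarrow> real^3) \<Rightarrow> (real \<Rightarrow> real^3) \<Rightarrow> (real \<Rightarrow> real^3) \<Rightarrow> real \<Rightarrow> real" where
  "rs_delta s1 e e1 u = s1 u \<bullet> cross3 (e u) (e1 u)"

definition rs_kappa :: "(real \<Rightarrow> real^3) \<Rightarrow> (real \<Rightarrow> real^3) \<Rightarrow> (real \<Rightarrow> real^3) \<Rightarrow> real \<Rightarrow> real" where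
  "rs_kappa e e1 e2 u = e u \<bullet> cross3 (e1 u) (e2 u)"

definition vec_angle :: "real^3 \<Rightarrow> real^3 \<Rightarrow> real" where
  "vec_angle a b = arccos ((a \<bullet> b) / (norm a * norm b))"

definition rs_lambda :: "(real \<Rightarrow> real^3) \<Rightarrow> (real \<Rightarrow> real^3) \<Rightarrow> real \<Rightarrow> real" where
  "rs_lambda s1 e u = cot (vec_angle (e u) (s1 u))"

definition rs_w :: "(real \<Rightarrow> real^3) \<Rightarrow> (real \<Rightarrow> real^3) \<Rightarrow> (real \<Rightarrow> real^3) \<Rightarrow> real \<Rightarrow> real \<Rightarrow> real" where
  "rs_w s1 e e1 u v = sqrt ((rs_delta s1 e e1 u)\<^sup>2 + v\<^sup>2)"

definition rs_xi :: "(real \<Rightarrow> real^3) \<Rightarrow> (real \<Rightarrow> real^3) \<Rightarrow> (real \<Rightarrow> real^3) \<Rightarrow> real \<Rightarrow> real \<Rightarrow> real^3" where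
  "rs_xi s1 e e1 u v = (1 / rs_w s1 e e1 u v) *\<^sub>R
      (rs_delta s1 e e1 u *\<^sub>R e1 u - v *\<^sub>R cross3 (e u) (e1 u))"

definition rs_h11 :: "(real \<Rightarrow> real^3) \<Rightarrow> (real \<Rightarrow> real^3) \<Rightarrow> (real \<Rightarrow> real^3) \<Rightarrow> (real \<Rightarrow> real^3) \<Rightarrow>
    (real \<Rightarrow> real^3) \<Rightarrow> real \<Rightarrow> real \<Rightarrow> real" where
  "rs_h11 s1 s2 e e1 e2 u v = rs_xi s1 e e1 u v \<bullet> (s2 u + v *\<^sub>R e2 u)"

definition rs_h12 :: "(real \<Rightarrow> real^3) \<Rightarrow> (real \<Rightarrow> real^3) \<Rightarrow> (real \<Rightarrow> real^3) \<Rightarrow> real \<Rightarrow> real \<Rightarrow> real" where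
  "rs_h12 s1 e e1 u v = rs_xi s1 e e1 u v \<bullet> e1 u"

definition rs_q :: "(real \<Rightarrow> real^3) \<Rightarrow> (real \<Rightarrow> real^3) \<Rightarrow> (real \<Rightarrow> real^3) \<Rightarrow>
    (real \<Rightarrow> real) \<Rightarrow> (real \<Rightarrow> real) \<Rightarrow> real \<Rightarrow> real \<Rightarrow> real" where
  "rs_q s1 e e1 f g u v = (f u + g u * v) / rs_w s1 e e1 u v"

text \<open>Components of the Tchebychev vector (formula from the context; the bracket
  kappa w^2 + delta' v - delta^2 lambda is written as its source, - w h_11).\<close>
definition rs_T1 :: "(real \<Rightarrow> real^3) \<Rightarrow> (real \<Rightarrow> real^3) \<Rightarrow> (real \<Rightarrow> real^3) \<Rightarrow>
    (real \<Rightarrow> real) \<Rightarrow> (real \<Rightarrow> real) \<Rightarrow> real \<Rightarrow> real \<Rightarrow> real" where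
  "rs_T1 s1 e e1 f g u v =
     ((rs_w s1 e e1 u v)\<^sup>2 * deriv (\<lambda>v'. rs_q s1 e e1 f g u v') v + v * rs_q s1 e e1 f g u v)
     / (rs_delta s1 e e1 u * rs_w s1 e e1 u v)"

definition rs_T2 :: "(real \<Rightarrow> real^3) \<Rightarrow> (real \<Rightarrow> real^3) \<Rightarrow> (real \<Rightarrow> real^3) \<Rightarrow> (real \<Rightarrow> real^3) \<Rightarrow>
    (real \<Rightarrow> real^3) \<Rightarrow> (real \<Rightarrow> real) \<Rightarrow> (real \<Rightarrow> real) \<Rightarrow> real \<Rightarrow> real \<Rightarrow> real" where
  "rs_T2 s1 s2 e e1 e2 f g u v =
     (let d = rs_delta s1 e e1 u; w = rs_w s1 e e1 u v; q = rs_q s1 e e1 f g u v in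
      (2 * d * w\<^sup>2 * deriv (\<lambda>u'. rs_q s1 e e1 f g u' v) u
         + deriv (rs_delta s1 e e1) u * q * (d\<^sup>2 - v\<^sup>2)) / (2 * d\<^sup>2 * w)
      + rs_T1 s1 e e1 f g u v * (- w * rs_h11 s1 s2 e e1 e2 u v) / d)"

definition rs_Tvec where
  "rs_Tvec s1 s2 e e1 e2 f g u v =
     rs_T1 s1 e e1 f g u v *\<^sub>R (s1 u + v *\<^sub>R e1 u) + rs_T2 s1 s2 e e1 e2 f g u v *\<^sub>R e u"

text \<open>Tangent vector x_u + v'(u) x_v of the curved asymptotic line v = v(u) through (u,v):
  the asymptotic line condition h_11 + 2 h_12 v' = 0 determines v'.\<close>
definition rs_asym_tangent where
  "rs_asym_tangent s1 s2 e e1 e2 u v =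
     (s1 u + v *\<^sub>R e1 u) +
     (- rs_h11 s1 s2 e e1 e2 u v / (2 * rs_h12 s1 e e1 u v)) *\<^sub>R e u"

definition tcheb_tangential_curved_asym where
  "tcheb_tangential_curved_asym s1 s2 e e1 e2 f g I J \<longleftrightarrow>
     (\<forall>u\<in>I. \<forall>v\<in>J. cross3 (rs_Tvec s1 s2 e e1 e2 f g u v) (rs_asym_tangent s1 s2 e e1 e2 u v) = 0)"

end

theory Submission
  imports Defs
begin


lemma frame_decomp:
  fixes e n x :: "real^3"
  assumes "e \<bullet> e = 1" "n \<bullet> n = 1" "e \<bullet> n = 0"
  shows "x = (x \<bullet> e) *\<^sub>R e + (x \<bullet> n) *\<^sub>R n + (x \<bullet> cross3 e n) *\<^sub>R cross3 e n"
proof -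
  define z where "z = cross3 e n"
  have ze: "z \<bullet> e = 0" and zn: "z \<bullet> n = 0" unfolding z_def by (simp_all add: dot_cross_self)
  have zz: "z \<bullet> z = 1" unfolding z_def using assms by (simp add: dot_cross inner_commute)
  define r where "r = x - (x \<bullet> e) *\<^sub>R e - (x \<bullet> n) *\<^sub>R n - (x \<bullet> z) *\<^sub>R z"
  have re: "r \<bullet> e = 0" unfolding r_def using assms ze zn
    by (simp add: inner_diff_left inner_diff_right inner_commute)
  have rn: "r \<bullet> n = 0" unfolding r_def using assms ze zn
    by (simp add: inner_diff_left inner_diff_right inner_commute)
  have rz: "r \<bullet> z = 0" unfolding r_def using assms ze zn zz
    by (simp add: inner_diff_left inner_diff_right inner_commute)
  have "cross3 r z = 0" unfolding z_def by (simp add: Lagrange re rn)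
  then have "(norm r * norm z)\<^sup>2 = 0" using norm_cross_dot[of r z] rz by simp
  moreover have "norm z = 1" using zz by (simp add: norm_eq_1)
  ultimately have "r = 0" by simp
  then show ?thesis unfolding r_def z_def by (simp add: algebra_simps)
qed

lemma frame_parseval:
  fixes e n x y :: "real^3"
  assumes "e \<bullet> e = 1" "n \<bullet> n = 1" "e \<bullet> n = 0"
  shows "x \<bullet> y = (x \<bullet> e) * (y \<bullet> e) + (x \<bullet> n) * (y \<bullet> n) + (x \<bullet> cross3 e n) * (y \<bullet> cross3 e n)"
proof -
  have "x \<bullet> y = ((x \<bullet> e) *\<^sub>R e + (x \<bullet> n) *\<^sub>R n + (x \<bullet> cross3 e n) *\<^sub>R cross3 e n) \<bullet> y"
    using frame_decomp[OF assms, of x] by simp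
  then show ?thesis by (simp add: inner_add_left inner_add_right inner_commute)
qed

lemma inner_const_deriv:
  fixes p q :: "real \<Rightarrow> real^3"
  assumes "(p has_vector_derivative p') (at u)" "(q has_vector_derivative q') (at u)"
    "open I" "u \<in> I" "\<And>x. x \<in> I \<Longrightarrow> p x \<bullet> q x = c"
  shows "p u \<bullet> q' + p' \<bullet> q u = 0"
proof -
  have "((\<lambda>x. p x \<bullet> q x) has_vector_derivative (p u \<bullet> q' + p' \<bullet> q u)) (at u)"
    using bounded_bilinear.has_vector_derivative[OF bounded_bilinear_inner assms(1,2)] by simp
  then have d1: "((\<lambda>x. p x \<bullet> q x) has_real_derivative (p u \<bullet> q' + p' \<bullet> q u)) (at u)"
    by (simp add: has_real_derivative_iff_has_vector_derivative)
  have "((\<lambda>x. c) has_real_derivative 0) (at u)" by simp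
  then have d2: "((\<lambda>x. p x \<bullet> q x) has_real_derivative 0) (at u)"
    by (rule has_field_derivative_transform_within_open[OF _ assms(3,4)]) (simp add: assms(5))
  show ?thesis using DERIV_unique[OF d1 d2] .
qed

lemma delta_deriv:
  fixes s1 e e1 :: "real \<Rightarrow> real^3"
  assumes "(s1 has_vector_derivative S2) (at u)" "(e has_vector_derivative E1) (at u)"
    "(e1 has_vector_derivative E2) (at u)"
  shows "((\<lambda>x. s1 x \<bullet> cross3 (e x) (e1 x)) has_real_derivative
     (s1 u \<bullet> (cross3 (e u) E2 + cross3 E1 (e1 u)) + S2 \<bullet> cross3 (e u) (e1 u))) (at u)"
proof -
  have bc: "bounded_bilinear cross3" using bilinear_cross bilinear_conv_bounded_bilinear by blast
  have "((\<lambda>x. cross3 (e x) (e1 x)) has_vector_derivative (cross3 (e u) E2 + cross3 E1 (e1 u))) (at u)"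
    using bounded_bilinear.has_vector_derivative[OF bc assms(2,3)] .
  from bounded_bilinear.has_vector_derivative[OF bounded_bilinear_inner assms(1) this]
  show ?thesis by (simp add: has_real_derivative_iff_has_vector_derivative)
qed



lemma h11_alg:
  fixes e n e2 s1 s2 :: "real^3"
  assumes ee: "e \<bullet> e = 1" and nn: "n \<bullet> n = 1" and en: "e \<bullet> n = 0" and ne2: "n \<bullet> e2 = 0"
    and ee2: "e \<bullet> e2 = -1" and sn: "s1 \<bullet> n = 0" and s2n: "s2 \<bullet> n + s1 \<bullet> e2 = 0"
    and w: "w > 0" "w\<^sup>2 = d\<^sup>2 + v\<^sup>2" and d: "d = s1 \<bullet> cross3 e n"
  shows "((1 / w) *\<^sub>R (d *\<^sub>R n - v *\<^sub>R cross3 e n)) \<bullet> (s2 + v *\<^sub>R e2) =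
     - ((e \<bullet> cross3 n e2) * w\<^sup>2 + (s2 \<bullet> cross3 e n) * v - d * (s1 \<bullet> e)) / w"
    and "s1 \<bullet> cross3 e e2 = 0"
proof -
  define z where "z = cross3 e n"
  have k: "e \<bullet> cross3 n e2 = z \<bullet> e2" unfolding z_def using cross_triple[of e n e2] by (simp add: inner_commute)
  have P: "\<And>x y. x \<bullet> y = (x \<bullet> e) * (y \<bullet> e) + (x \<bullet> n) * (y \<bullet> n) + (x \<bullet> z) * (y \<bullet> z)"
    unfolding z_def using frame_parseval[OF ee nn en] .
  have zn: "z \<bullet> n = 0" unfolding z_def by (simp add: dot_cross_self)
  have s1e2: "s1 \<bullet> e2 = - (s1 \<bullet> e) + d * (z \<bullet> e2)"
    using P[of s1 e2] sn ee2 d unfolding z_def by (simp add: inner_commute)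
  have c1: "cross3 e e2 \<bullet> e = 0" by (simp add: dot_cross_self)
  have c2: "cross3 e e2 \<bullet> z = 0" unfolding z_def using dot_cross[of e e2 e n] ee en ne2
    by (simp add: inner_commute)
  show "s1 \<bullet> cross3 e e2 = 0" using P[of s1 "cross3 e e2"] c1 c2 sn by simp
  have "((1 / w) *\<^sub>R (d *\<^sub>R n - v *\<^sub>R z)) \<bullet> (s2 + v *\<^sub>R e2)
      = (d * (s2 \<bullet> n) + d * v * (n \<bullet> e2) - v * (z \<bullet> s2) - v * v * (z \<bullet> e2)) / w"
    by (simp add: inner_diff_left inner_add_right algebra_simps divide_simps inner_commute)
  also have "\<dots> = - ((z \<bullet> e2) * w\<^sup>2 + (s2 \<bullet> z) * v - d * (s1 \<bullet> e)) / w"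
  proof -
    have h: "n \<bullet> s2 = e \<bullet> s1 - d * (e2 \<bullet> z)" using s2n s1e2 by (simp add: inner_commute)
    show ?thesis using ne2 w(2) by (simp add: h inner_commute algebra_simps power2_eq_square)
  qed
  finally show "((1 / w) *\<^sub>R (d *\<^sub>R n - v *\<^sub>R cross3 e n)) \<bullet> (s2 + v *\<^sub>R e2) =
     - ((e \<bullet> cross3 n e2) * w\<^sup>2 + (s2 \<bullet> cross3 e n) * v - d * (s1 \<bullet> e)) / w"
    unfolding k z_def .
qed



lemma T_alg:
  fixes d w v Fz G Fd Gd dd k a :: real
  assumes d: "d \<noteq> 0" and w: "w > 0" "w\<^sup>2 = d\<^sup>2 + v\<^sup>2"
  defines "q \<equiv> (Fz + G * v) / w"
    and "qv \<equiv> (G * d\<^sup>2 - Fz * v) / w ^ 3"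
    and "qu \<equiv> (Fd + Gd * v) / w - (Fz + G * v) * d * dd / w ^ 3"
    and "h11 \<equiv> - (k * w\<^sup>2 + dd * v - d * a) / w"
    and "h12 \<equiv> d / w"
  defines "T1 \<equiv> (w\<^sup>2 * qv + v * q) / (d * w)"
  defines "T2 \<equiv> (2 * d * w\<^sup>2 * qu + dd * q * (d\<^sup>2 - v\<^sup>2)) / (2 * d\<^sup>2 * w) + T1 * (- w * h11) / d"
  shows "T1 = G / d"
    and "T1 * (- h11 / (2 * h12)) - T2 =
       - (G * k * v\<^sup>2 + 2 * d * Gd * v + (2 * d * Fd - dd * Fz + G * k * d\<^sup>2 - G * d * a)) / (2 * d\<^sup>2)"
proof -
  have w0: "w \<noteq> 0" using w by simp
  have w3: "w ^ 3 = w * w\<^sup>2" by (simp add: power3_eq_cube power2_eq_square)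
  have w2: "w\<^sup>2 \<noteq> 0" using w0 by simp
  have e1: "w\<^sup>2 * qv = (G * d\<^sup>2 - Fz * v) / w" unfolding qv_def w3 using w0 w2 by (simp add: field_simps)
  have e2: "w\<^sup>2 * qv + v * q = G * w" unfolding e1 q_def using w0
    by (simp add: field_simps) (insert w(2), algebra)
  show T1: "T1 = G / d" unfolding T1_def e2 using d w0 by simp
  have e3: "2 * d * w\<^sup>2 * qu = (2 * d * (Fd + Gd * v) * w\<^sup>2 - 2 * d\<^sup>2 * dd * (Fz + G * v)) / w"
    unfolding qu_def w3 using w0 w2 by (simp add: field_simps power2_eq_square)
  have e4: "2 * d * w\<^sup>2 * qu + dd * q * (d\<^sup>2 - v\<^sup>2) = w * (2 * d * (Fd + Gd * v) - dd * (Fz + G * v))"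
    unfolding e3 q_def using w0
    by (simp add: field_simps) (insert w(2), algebra)
  have A: "(2 * d * w\<^sup>2 * qu + dd * q * (d\<^sup>2 - v\<^sup>2)) / (2 * d\<^sup>2 * w)
     = (2 * d * (Fd + Gd * v) - dd * (Fz + G * v)) / (2 * d\<^sup>2)"
    unfolding e4 using d w0 by simp
  have B: "w * h11 = - (k * (d\<^sup>2 + v\<^sup>2) + dd * v - d * a)" unfolding h11_def w(2) using w0 by simp
  have C: "- h11 / (2 * h12) = (k * (d\<^sup>2 + v\<^sup>2) + dd * v - d * a) / (2 * d)"
    unfolding h12_def using w0 d B[symmetric] by (simp add: field_simps)
  show "T1 * (- h11 / (2 * h12)) - T2 =
       - (G * k * v\<^sup>2 + 2 * d * Gd * v + (2 * d * Fd - dd * Fz + G * k * d\<^sup>2 - G * d * a)) / (2 * d\<^sup>2)"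
  proof -
    have B': "T1 * (- w * h11) / d = G * (k * (d\<^sup>2 + v\<^sup>2) + dd * v - d * a) / d\<^sup>2"
    proof -
      have B2: "- w * h11 = k * (d\<^sup>2 + v\<^sup>2) + dd * v - d * a" using B by simp
      show ?thesis unfolding T1 B2 by (simp add: power2_eq_square)
    qed
    have T2e: "T2 = (2 * d * (Fd + Gd * v) - dd * (Fz + G * v)) / (2 * d\<^sup>2) + G * (k * (d\<^sup>2 + v\<^sup>2) + dd * v - d * a) / d\<^sup>2"
      using A B' unfolding T2_def by simp
    show ?thesis unfolding T2e T1 C
      using d by (simp add: field_simps) (simp add: algebra_simps eval_nat_numeral)
  qed
qed



lemma sqrt_deriv:
  fixes h :: "real \<Rightarrow> real"
  assumes "(h has_real_derivative H) (at x)" "h x > 0"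
  shows "((\<lambda>y. sqrt (h y)) has_real_derivative (H / (2 * sqrt (h x)))) (at x)"
  using DERIV_chain2[OF DERIV_real_sqrt[OF assms(2)] assms(1)] by (simp add: field_simps)

lemma quot_deriv:
  fixes N D :: "real \<Rightarrow> real"
  assumes "(N has_real_derivative N') (at x)" "(D has_real_derivative D') (at x)" "D x \<noteq> 0"
  shows "((\<lambda>y. N y / D y) has_real_derivative ((N' * D x - N x * D') / (D x)\<^sup>2)) (at x)"
  using DERIV_divide[OF assms] by (simp add: power2_eq_square)

lemma qv_deriv:
  fixes d F0 G v :: real assumes "d \<noteq> 0"
  shows "((\<lambda>v'. (F0 + G * v') / sqrt (d\<^sup>2 + v'\<^sup>2)) has_real_derivative
     (G * d\<^sup>2 - F0 * v) / (sqrt (d\<^sup>2 + v\<^sup>2)) ^ 3) (at v)"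
proof -
  have p: "d\<^sup>2 + v\<^sup>2 > 0" using assms by (simp add: add_pos_nonneg)
  define w where "w = sqrt (d\<^sup>2 + v\<^sup>2)"
  have w: "w > 0" "w\<^sup>2 = d\<^sup>2 + v\<^sup>2" unfolding w_def using p by auto
  have h: "((\<lambda>y. d\<^sup>2 + y\<^sup>2) has_real_derivative (2 * v)) (at v)"
    using DERIV_add[OF DERIV_const[of "d\<^sup>2"] DERIV_pow[of 2 v]] by simp
  have s: "((\<lambda>y. sqrt (d\<^sup>2 + y\<^sup>2)) has_real_derivative (2 * v / (2 * w))) (at v)"
    using sqrt_deriv[OF h p] unfolding w_def .
  have n: "((\<lambda>y. F0 + G * y) has_real_derivative G) (at v)"
    using DERIV_add[OF DERIV_const[of F0] DERIV_cmult[OF DERIV_ident, of G]] by simp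
  have "((\<lambda>v'. (F0 + G * v') / sqrt (d\<^sup>2 + v'\<^sup>2)) has_real_derivative
     ((G * w - (F0 + G * v) * (2 * v / (2 * w))) / w\<^sup>2)) (at v)"
  proof -
    have "sqrt (d\<^sup>2 + v\<^sup>2) \<noteq> 0" using p by (metis less_irrefl real_sqrt_eq_zero_cancel_iff)
    from quot_deriv[OF n s this] show ?thesis unfolding w_def by simp
  qed
  moreover have "(G * w - (F0 + G * v) * (2 * v / (2 * w))) / w\<^sup>2 = (G * d\<^sup>2 - F0 * v) / w ^ 3"
    using w by (simp add: field_simps power3_eq_cube power2_eq_square)
  ultimately show ?thesis unfolding w_def by simp
qed

lemma qu_deriv:
  fixes f g dl :: "real \<Rightarrow> real"
  assumes f: "(f has_real_derivative F1) (at u)" and g: "(g has_real_derivative G1) (at u)"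
    and dl: "(dl has_real_derivative D1) (at u)" and d: "dl u \<noteq> 0"
  shows "((\<lambda>u'. (f u' + g u' * v) / sqrt ((dl u')\<^sup>2 + v\<^sup>2)) has_real_derivative
     ((F1 + G1 * v) / sqrt ((dl u)\<^sup>2 + v\<^sup>2) - (f u + g u * v) * dl u * D1 / (sqrt ((dl u)\<^sup>2 + v\<^sup>2)) ^ 3)) (at u)"
proof -
  have p: "(dl u)\<^sup>2 + v\<^sup>2 > 0" using d by (simp add: add_pos_nonneg)
  define w where "w = sqrt ((dl u)\<^sup>2 + v\<^sup>2)"
  have w: "w > 0" "w\<^sup>2 = (dl u)\<^sup>2 + v\<^sup>2" unfolding w_def using p by auto
  have h: "((\<lambda>y. (dl y)\<^sup>2 + v\<^sup>2) has_real_derivative (2 * dl u * D1)) (at u)"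
    using DERIV_add[OF DERIV_power[OF dl, of 2] DERIV_const[of "v\<^sup>2"]] by (simp add: mult.commute mult.left_commute)
  have s: "((\<lambda>y. sqrt ((dl y)\<^sup>2 + v\<^sup>2)) has_real_derivative (2 * dl u * D1 / (2 * w))) (at u)"
    using sqrt_deriv[OF h p] unfolding w_def .
  have n: "((\<lambda>y. f y + g y * v) has_real_derivative (F1 + G1 * v)) (at u)"
    using DERIV_add[OF f DERIV_mult[OF g DERIV_const[of v]]] by simp
  have "((\<lambda>u'. (f u' + g u' * v) / sqrt ((dl u')\<^sup>2 + v\<^sup>2)) has_real_derivative
     (((F1 + G1 * v) * w - (f u + g u * v) * (2 * dl u * D1 / (2 * w))) / w\<^sup>2)) (at u)"
  proof -
    have "sqrt ((dl u)\<^sup>2 + v\<^sup>2) \<noteq> 0" using p by (metis less_irrefl real_sqrt_eq_zero_cancel_iff)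
    from quot_deriv[OF n s this] show ?thesis unfolding w_def by simp
  qed
  moreover have "((F1 + G1 * v) * w - (f u + g u * v) * (2 * dl u * D1 / (2 * w))) / w\<^sup>2
      = (F1 + G1 * v) / w - (f u + g u * v) * dl u * D1 / w ^ 3"
    using w(1) by (simp add: field_simps power3_eq_cube power2_eq_square)
  ultimately show ?thesis unfolding w_def by simp
qed



lemma pointwise:
  fixes s s1 s2 s3 e e1 e2 e3 :: "real \<Rightarrow> real^3" and f g :: "real \<Rightarrow> real"
  assumes ruled: "standard_ruled s s1 s2 s3 e e1 e2 e3 I"
    and skew: "\<forall>u\<in>I. rs_delta s1 e e1 u \<noteq> 0"
    and uI: "u \<in> I"
    and fd: "(f has_real_derivative F1) (at u)" and gd: "(g has_real_derivative G1) (at u)"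
  shows "(rs_delta s1 e e1 has_real_derivative deriv (rs_delta s1 e e1) u) (at u)"
    and "cross3 (rs_Tvec s1 s2 e e1 e2 f g u v) (rs_asym_tangent s1 s2 e e1 e2 u v) = 0 \<longleftrightarrow>
      g u * rs_kappa e e1 e2 u * v\<^sup>2 + 2 * rs_delta s1 e e1 u * G1 * v +
      (2 * rs_delta s1 e e1 u * F1 - deriv (rs_delta s1 e e1) u * f u
        + g u * rs_kappa e e1 e2 u * (rs_delta s1 e e1 u)\<^sup>2
        - g u * rs_delta s1 e e1 u * (s1 u \<bullet> e u)) = 0"
proof -
  have oI: "open I" using ruled unfolding standard_ruled_def by blast
  have D: "\<And>x. x \<in> I \<Longrightarrow> (s1 has_vector_derivative s2 x) (at x) \<and>
      (e has_vector_derivative e1 x) (at x) \<and> (e1 has_vector_derivative e2 x) (at x)"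
    using ruled unfolding standard_ruled_def by blast
  have N: "\<And>x. x \<in> I \<Longrightarrow> e x \<bullet> e x = 1 \<and> e1 x \<bullet> e1 x = 1 \<and> s1 x \<bullet> e1 x = 0"
    using ruled unfolding standard_ruled_def by (auto simp: norm_eq_1)
  have eeall: "\<And>x. x \<in> I \<Longrightarrow> e x \<bullet> e1 x = 0"
  proof -
    fix x assume x: "x \<in> I"
    have "e x \<bullet> e1 x + e1 x \<bullet> e x = 0"
      by (rule inner_const_deriv[of e "e1 x" x e "e1 x" I 1]) (use D[OF x] oI x N in auto)
    then show "e x \<bullet> e1 x = 0" by (simp add: inner_commute)
  qed
  have ee: "e u \<bullet> e u = 1" and nn: "e1 u \<bullet> e1 u = 1" and sn: "s1 u \<bullet> e1 u = 0"
    using N[OF uI] by auto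
  have en: "e u \<bullet> e1 u = 0" using eeall[OF uI] .
  have ee2: "e u \<bullet> e2 u = -1"
  proof -
    have "e u \<bullet> e2 u + e1 u \<bullet> e1 u = 0"
      by (rule inner_const_deriv[of e "e1 u" u e1 "e2 u" I 0]) (use D[OF uI] oI uI eeall in auto)
    then show ?thesis using nn by simp
  qed
  have ne2: "e1 u \<bullet> e2 u = 0"
  proof -
    have "e1 u \<bullet> e2 u + e2 u \<bullet> e1 u = 0"
      by (rule inner_const_deriv[of e1 "e2 u" u e1 "e2 u" I 1]) (use D[OF uI] oI uI N in auto)
    then show ?thesis by (simp add: inner_commute)
  qed
  have s2n: "s2 u \<bullet> e1 u + s1 u \<bullet> e2 u = 0"
  proof -
    have "s1 u \<bullet> e2 u + s2 u \<bullet> e1 u = 0"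
      by (rule inner_const_deriv[of s1 "s2 u" u e1 "e2 u" I 0]) (use D[OF uI] oI uI N in auto)
    then show ?thesis by simp
  qed
  define d where "d = rs_delta s1 e e1 u"
  define z where "z = cross3 (e u) (e1 u)"
  have d0: "d \<noteq> 0" unfolding d_def using skew uI by blast
  have dz: "d = s1 u \<bullet> z" unfolding d_def z_def rs_delta_def ..
  have dfun: "rs_delta s1 e e1 = (\<lambda>x. s1 x \<bullet> cross3 (e x) (e1 x))"
    by (rule ext) (simp add: rs_delta_def)
  define w where "w = sqrt (d\<^sup>2 + v\<^sup>2)"
  have p: "d\<^sup>2 + v\<^sup>2 > 0" using d0 by (simp add: add_pos_nonneg)
  have w: "w > 0" "w\<^sup>2 = d\<^sup>2 + v\<^sup>2" unfolding w_def using p by auto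
  have wdef: "rs_w s1 e e1 u v = w" unfolding w_def rs_w_def d_def ..
  note H = h11_alg[OF ee nn en ne2 ee2 sn s2n w dz[unfolded z_def]]
  have ddv: "(rs_delta s1 e e1 has_real_derivative (s2 u \<bullet> z)) (at u)"
    using delta_deriv[of s1 "s2 u" u e "e1 u" e1 "e2 u"] D[OF uI] H(2) unfolding dfun z_def
    by (simp add: inner_add_right)
  then have dd: "deriv (rs_delta s1 e e1) u = s2 u \<bullet> z" by (rule DERIV_imp_deriv)
  show "(rs_delta s1 e e1 has_real_derivative deriv (rs_delta s1 e e1) u) (at u)"
    using ddv dd by simp
  show "cross3 (rs_Tvec s1 s2 e e1 e2 f g u v) (rs_asym_tangent s1 s2 e e1 e2 u v) = 0 \<longleftrightarrow>
      g u * rs_kappa e e1 e2 u * v\<^sup>2 + 2 * rs_delta s1 e e1 u * G1 * v +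
      (2 * rs_delta s1 e e1 u * F1 - deriv (rs_delta s1 e e1) u * f u
        + g u * rs_kappa e e1 e2 u * (rs_delta s1 e e1 u)\<^sup>2
        - g u * rs_delta s1 e e1 u * (s1 u \<bullet> e u)) = 0"
  proof -
    define k where "k = rs_kappa e e1 e2 u"
    define a where "a = s1 u \<bullet> e u"
    define ddv where "ddv = deriv (rs_delta s1 e e1) u"
    define X where "X = s1 u + v *\<^sub>R e1 u"
    have kd: "k = e u \<bullet> cross3 (e1 u) (e2 u)" unfolding k_def rs_kappa_def ..
    have h11: "rs_h11 s1 s2 e e1 e2 u v = - (k * w\<^sup>2 + ddv * v - d * a) / w"
      unfolding rs_h11_def rs_xi_def wdef d_def[symmetric] H(1) kd ddv_def dd z_def a_def ..
    have h12: "rs_h12 s1 e e1 u v = d / w"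
      unfolding rs_h12_def rs_xi_def wdef d_def[symmetric] using nn
      by (simp add: inner_diff_left dot_cross_self)
    have qfun: "\<And>u' v'. rs_q s1 e e1 f g u' v' = (f u' + g u' * v') / sqrt ((rs_delta s1 e e1 u')\<^sup>2 + v'\<^sup>2)"
      unfolding rs_q_def rs_w_def ..
    have q: "rs_q s1 e e1 f g u v = (f u + g u * v) / w" unfolding qfun w_def d_def ..
    have qv: "deriv (\<lambda>v'. rs_q s1 e e1 f g u v') v = (g u * d\<^sup>2 - f u * v) / w ^ 3"
      unfolding qfun d_def[symmetric] w_def using qv_deriv[OF d0, of "f u" "g u" v]
      by (rule DERIV_imp_deriv)
    have qu: "deriv (\<lambda>u'. rs_q s1 e e1 f g u' v) u = (F1 + G1 * v) / w - (f u + g u * v) * d * ddv / w ^ 3"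
      unfolding qfun w_def d_def ddv_def
      using qu_deriv[OF fd gd ddv[unfolded dd[symmetric]], of v] d0[unfolded d_def]
      by (intro DERIV_imp_deriv) simp
    note TA1 = T_alg(1)[OF d0 w, where Fz="f u" and G="g u"]
    note TA2 = T_alg(2)[OF d0 w, where Fz="f u" and G="g u" and Fd=F1 and Gd=G1 and dd=ddv and k=k and a=a]
    have T1e: "rs_T1 s1 e e1 f g u v = (w\<^sup>2 * ((g u * d\<^sup>2 - f u * v) / w ^ 3) + v * ((f u + g u * v) / w)) / (d * w)"
      unfolding rs_T1_def wdef qv q d_def[symmetric] ..
    have T1: "rs_T1 s1 e e1 f g u v = g u / d"
      unfolding rs_T1_def wdef qv q d_def[symmetric] using TA1 by simp
    have T2: "rs_T2 s1 s2 e e1 e2 f g u v =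
       (2 * d * w\<^sup>2 * ((F1 + G1 * v) / w - (f u + g u * v) * d * ddv / w ^ 3)
         + ddv * ((f u + g u * v) / w) * (d\<^sup>2 - v\<^sup>2)) / (2 * d\<^sup>2 * w)
       + ((w\<^sup>2 * ((g u * d\<^sup>2 - f u * v) / w ^ 3) + v * ((f u + g u * v) / w)) / (d * w))
         * (- w * (- (k * w\<^sup>2 + ddv * v - d * a) / w)) / d"
      unfolding rs_T2_def Let_def wdef qu q d_def[symmetric] ddv_def[symmetric] h11
      unfolding rs_T1_def wdef qv q d_def[symmetric] ..
    have cm: "T1 * (- h11 / (2 * h12)) - T2 =
       - (G * k * v\<^sup>2 + 2 * d * G1 * v + (2 * d * F1 - ddv * F0 + G * k * d\<^sup>2 - G * d * a)) / (2 * d\<^sup>2)"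
      if "T1 = rs_T1 s1 e e1 f g u v" "T2 = rs_T2 s1 s2 e e1 e2 f g u v"
         "h11 = rs_h11 s1 s2 e e1 e2 u v" "h12 = rs_h12 s1 e e1 u v" "G = g u" "F0 = f u"
      for T1 T2 h11 h12 G F0
      unfolding that T1e T2 h11 h12 by (rule TA2)
    define c where "c = rs_T1 s1 e e1 f g u v * (- rs_h11 s1 s2 e e1 e2 u v / (2 * rs_h12 s1 e e1 u v))
       - rs_T2 s1 s2 e e1 e2 f g u v"
    have cP: "c = - (g u * k * v\<^sup>2 + 2 * d * G1 * v + (2 * d * F1 - ddv * f u + g u * k * d\<^sup>2 - g u * d * a)) / (2 * d\<^sup>2)"
      unfolding c_def by (rule cm) auto
    have sk: "cross3 (e u) X = - cross3 X (e u)" by (rule cross_skew)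
    have cr: "cross3 (rs_Tvec s1 s2 e e1 e2 f g u v) (rs_asym_tangent s1 s2 e e1 e2 u v) = c *\<^sub>R cross3 X (e u)"
      unfolding rs_Tvec_def rs_asym_tangent_def X_def[symmetric] c_def
      by (simp add: cross_add_left cross_add_right cross_mult_left cross_mult_right sk scaleR_diff_left Cross3.right_diff_distrib Cross3.left_diff_distrib)
    have V: "cross3 X (e u) \<bullet> e1 u = d"
      using cross_triple[of X "e u" "e1 u"] unfolding X_def dz z_def
      by (simp add: inner_add_left inner_add_right dot_cross_self inner_commute)
    have V0: "cross3 X (e u) \<noteq> 0" using V d0 by auto
    have "cross3 (rs_Tvec s1 s2 e e1 e2 f g u v) (rs_asym_tangent s1 s2 e e1 e2 u v) = 0 \<longleftrightarrow> c = 0"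
      unfolding cr using V0 by simp
    also have "\<dots> \<longleftrightarrow> g u * k * v\<^sup>2 + 2 * d * G1 * v + (2 * d * F1 - ddv * f u + g u * k * d\<^sup>2 - g u * d * a) = 0"
      unfolding cP using d0 by (simp add: algebra_simps) (smt (verit))
    finally show ?thesis unfolding k_def ddv_def a_def d_def .
  qed
qed



lemma F_alg1:
  fixes c d S D f F1 a :: real
  assumes c: "c \<noteq> 0" and d: "d \<noteq> 0" and S: "S > 0" "S\<^sup>2 = \<bar>d\<bar>"
    and E: "2 * d * F1 - D * f - c * d * a = 0"
  shows "2 / c * ((F1 * S - f * ((d * D / \<bar>d\<bar>) / (2 * S))) / S\<^sup>2) = S * (a / \<bar>d\<bar>)"
proof -
  have F1: "F1 = (D * f + c * d * a) / (2 * d)" using E d by (simp add: field_simps)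
  show ?thesis
  proof (cases "d > 0")
    case True
    then have ad: "\<bar>d\<bar> = d" by simp
    show ?thesis unfolding F1 ad S(2)[unfolded ad, symmetric] using c S(1) True
      by (simp add: field_simps power2_eq_square)
  next
    case False
    then have ad: "\<bar>d\<bar> = - d" using d by simp
    have dS: "d = - S\<^sup>2" using S(2) ad by simp
    show ?thesis unfolding F1 ad dS using c S(1)
      by (simp add: field_simps power2_eq_square)
  qed
qed

lemma F_alg2:
  fixes c d S D h a :: real
  assumes d: "d \<noteq> 0" and S: "S > 0" "S\<^sup>2 = \<bar>d\<bar>"
  shows "2 * d * ((d * D / \<bar>d\<bar>) / (2 * S) * h + S * (c / 2 * (S * (a / \<bar>d\<bar>)))) - D * (S * h) - c * d * a = 0"
proof (cases "d > 0")
  case True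
  then have ad: "\<bar>d\<bar> = d" by simp
  have dS: "d = S\<^sup>2" using S(2) ad by simp
  show ?thesis unfolding ad dS using S(1) by (simp add: field_simps power2_eq_square)
next
  case False
  then have ad: "\<bar>d\<bar> = - d" using d by simp
  have dS: "d = - S\<^sup>2" using S(2) ad by simp
  show ?thesis unfolding ad dS using S(1) by (simp add: field_simps power2_eq_square)
qed

lemma sqrt_abs_deriv:
  fixes dl :: "real \<Rightarrow> real"
  assumes dl: "(dl has_real_derivative D) (at u)" and d: "dl u \<noteq> 0"
  shows "((\<lambda>x. sqrt \<bar>dl x\<bar>) has_real_derivative ((dl u * D / \<bar>dl u\<bar>) / (2 * sqrt \<bar>dl u\<bar>))) (at u)"
proof -
  have h: "((\<lambda>x. (dl x)\<^sup>2) has_real_derivative (2 * dl u * D)) (at u)"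
    using DERIV_power[OF dl, of 2] by (simp add: mult.commute mult.left_commute)
  have p: "(dl u)\<^sup>2 > 0" using d by simp
  have s1: "((\<lambda>x. sqrt ((dl x)\<^sup>2)) has_real_derivative (2 * dl u * D / (2 * sqrt ((dl u)\<^sup>2)))) (at u)"
    using sqrt_deriv[OF h p] .
  then have s1': "((\<lambda>x. \<bar>dl x\<bar>) has_real_derivative (dl u * D / \<bar>dl u\<bar>)) (at u)"
    by (simp add: real_sqrt_abs)
  have p2: "\<bar>dl u\<bar> > 0" using d by simp
  show ?thesis using sqrt_deriv[OF s1' p2] .
qed

lemma quad_zero:
  fixes A B C :: real and J :: "real set"
  assumes J: "open J" "J \<noteq> {}" and P: "\<And>v. v \<in> J \<Longrightarrow> A * v\<^sup>2 + B * v + C = 0"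
  shows "A = 0 \<and> B = 0 \<and> C = 0"
proof -
  obtain v0 where v0: "v0 \<in> J" using J by blast
  obtain r where r: "r > 0" "ball v0 r \<subseteq> J" using J(1) v0 open_contains_ball by blast
  define h where "h = r / 2"
  have h: "h > 0" "h < r" using r unfolding h_def by auto
  have "v0 + h \<in> J" "v0 - h \<in> J" using r h by (auto simp: dist_real_def)
  then have E1: "A * (v0 + h)\<^sup>2 + B * (v0 + h) + C = 0" and E3: "A * (v0 - h)\<^sup>2 + B * (v0 - h) + C = 0"
    and E2: "A * v0\<^sup>2 + B * v0 + C = 0" using P v0 by auto
  have "(A * (v0 + h)\<^sup>2 + B * (v0 + h) + C) + (A * (v0 - h)\<^sup>2 + B * (v0 - h) + C)
      - 2 * (A * v0\<^sup>2 + B * v0 + C) = 2 * A * h\<^sup>2"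
    by (simp add: algebra_simps power2_eq_square)
  then have "2 * A * h\<^sup>2 = 0" using E1 E2 E3 by simp
  then have A: "A = 0" using h by simp
  have "(A * (v0 + h)\<^sup>2 + B * (v0 + h) + C) - (A * (v0 - h)\<^sup>2 + B * (v0 - h) + C) = 2 * B * h"
    using A by (simp add: algebra_simps)
  then have "2 * B * h = 0" using E1 E3 by simp
  then have B: "B = 0" using h by simp
  show ?thesis using A B E2 by simp
qed

lemma lambda_val:
  fixes e n s1 :: "real^3"
  assumes ee: "e \<bullet> e = 1" and nn: "n \<bullet> n = 1" and en: "e \<bullet> n = 0" and sn: "s1 \<bullet> n = 0"
    and d: "s1 \<bullet> cross3 e n \<noteq> 0"
  shows "cot (vec_angle e s1) = (s1 \<bullet> e) / \<bar>s1 \<bullet> cross3 e n\<bar>"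
proof -
  define a where "a = s1 \<bullet> e"
  define dd where "dd = s1 \<bullet> cross3 e n"
  have ss: "s1 \<bullet> s1 = a\<^sup>2 + dd\<^sup>2" using frame_parseval[OF ee nn en, of s1 s1] sn
    unfolding a_def dd_def by (simp add: power2_eq_square)
  have ne: "norm e = 1" using ee by (simp add: norm_eq_1)
  define N where "N = norm s1"
  have N2: "N\<^sup>2 = a\<^sup>2 + dd\<^sup>2" unfolding N_def using ss by (simp add: power2_norm_eq_inner)
  have ddp: "dd\<^sup>2 > 0" using d unfolding dd_def by simp
  have "s1 \<noteq> 0" using d by auto
  then have Np: "N > 0" unfolding N_def by simp
  define x where "x = a / N"
  have va: "vec_angle e s1 = arccos x" unfolding vec_angle_def x_def a_def N_def using ne
    by (simp add: inner_commute)
  have x2: "1 - x\<^sup>2 = dd\<^sup>2 / N\<^sup>2" unfolding x_def using Np N2 ddp by (simp add: field_simps)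
  have "dd\<^sup>2 / N\<^sup>2 > 0" using ddp Np by simp
  then have x2p: "x\<^sup>2 < 1" using x2 by linarith
  then have "\<bar>x\<bar> < 1" by (simp add: abs_square_less_1)
  then have xb: "-1 \<le> x" "x \<le> 1" by auto
  have sq: "sqrt (1 - x\<^sup>2) = \<bar>dd\<bar> / N" unfolding x2 using Np
    by (simp add: real_sqrt_divide real_sqrt_abs)
  have "cot (vec_angle e s1) = x / sqrt (1 - x\<^sup>2)"
    unfolding va cot_def using xb by (simp add: cos_arccos sin_arccos)
  also have "\<dots> = x / (\<bar>dd\<bar> / N)" by (simp only: sq)
  also have "\<dots> = a / \<bar>dd\<bar>" unfolding x_def using Np by simp
  finally show ?thesis unfolding a_def dd_def .
qed



lemma frame_en:
  assumes ruled: "standard_ruled s s1 s2 s3 e e1 e2 e3 I" and uI: "u \<in> I"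
  shows "e u \<bullet> e u = 1" "e1 u \<bullet> e1 u = 1" "e u \<bullet> e1 u = 0" "s1 u \<bullet> e1 u = 0"
proof -
  have oI: "open I" using ruled unfolding standard_ruled_def by blast
  have D: "(e has_vector_derivative e1 u) (at u)"
    using ruled uI unfolding standard_ruled_def by blast
  have N: "\<And>x. x \<in> I \<Longrightarrow> e x \<bullet> e x = 1 \<and> e1 x \<bullet> e1 x = 1 \<and> s1 x \<bullet> e1 x = 0"
    using ruled unfolding standard_ruled_def by (auto simp: norm_eq_1)
  show "e u \<bullet> e u = 1" "e1 u \<bullet> e1 u = 1" "s1 u \<bullet> e1 u = 0" using N[OF uI] by auto
  have "e u \<bullet> e1 u + e1 u \<bullet> e u = 0"
    by (rule inner_const_deriv[of e "e1 u" u e "e1 u" I 1]) (use D oI uI N in auto)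
  then show "e u \<bullet> e1 u = 0" by (simp add: inner_commute)
qed

theorem proposition6:
  fixes s s1 s2 s3 e e1 e2 e3 :: "real \<Rightarrow> real^3"
    and f g :: "real \<Rightarrow> real"
    and I J :: "real set"
  assumes ruled: "standard_ruled s s1 s2 s3 e e1 e2 e3 I"
    and skew: "\<forall>u\<in>I. rs_delta s1 e e1 u \<noteq> 0"
    and J: "open J" "J \<noteq> {}"
    and fg_diff: "\<forall>u\<in>I. f differentiable (at u) \<and> g differentiable (at u)"
    and q_nz: "\<forall>u\<in>I. \<forall>v\<in>J. f u + g u * v \<noteq> 0"
    and f_nz: "\<exists>u\<in>I. f u \<noteq> 0"
    and g_nz: "\<exists>u\<in>I. g u \<noteq> 0"
  shows "tcheb_tangential_curved_asym s1 s2 e e1 e2 f g I J \<longleftrightarrow>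
    ((\<forall>u\<in>I. rs_kappa e e1 e2 u = 0) \<and>
     (\<exists>c1. c1 \<noteq> 0 \<and> (\<forall>u\<in>I. g u = c1) \<and>
        (\<exists>F c2. (\<forall>u\<in>I. (F has_real_derivative
                      (sqrt \<bar>rs_delta s1 e e1 u\<bar> * rs_lambda s1 e u)) (at u)) \<and>
                (\<forall>u\<in>I. f u = sqrt \<bar>rs_delta s1 e e1 u\<bar> * (c1 / 2 * F u + c2)))))"
proof -
  define dl where "dl = rs_delta s1 e e1"
  have oI: "open I" and ivI: "is_interval I" using ruled unfolding standard_ruled_def by blast+
  have fD: "\<And>u. u \<in> I \<Longrightarrow> (f has_real_derivative deriv f u) (at u)"
    using fg_diff DERIV_deriv_iff_real_differentiable by blast
  have gD: "\<And>u. u \<in> I \<Longrightarrow> (g has_real_derivative deriv g u) (at u)"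
    using fg_diff DERIV_deriv_iff_real_differentiable by blast
  have dD: "\<And>u. u \<in> I \<Longrightarrow> (dl has_real_derivative deriv dl u) (at u)"
    unfolding dl_def using pointwise(1)[OF ruled skew _ fD gD] by blast
  have d0: "\<And>u. u \<in> I \<Longrightarrow> dl u \<noteq> 0" using skew unfolding dl_def by blast
  have lam: "\<And>u. u \<in> I \<Longrightarrow> rs_lambda s1 e u = (s1 u \<bullet> e u) / \<bar>dl u\<bar>"
  proof -
    fix u assume uI: "u \<in> I"
    note fr = frame_en[OF ruled uI]
    have "s1 u \<bullet> cross3 (e u) (e1 u) \<noteq> 0" using d0[OF uI] unfolding dl_def rs_delta_def .
    from lambda_val[OF fr(1,2,3,4) this]
    show "rs_lambda s1 e u = (s1 u \<bullet> e u) / \<bar>dl u\<bar>"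
      unfolding rs_lambda_def dl_def rs_delta_def .
  qed
  have S: "\<And>u. u \<in> I \<Longrightarrow> sqrt \<bar>dl u\<bar> > 0 \<and> (sqrt \<bar>dl u\<bar>)\<^sup>2 = \<bar>dl u\<bar>"
    using d0 by auto
  note PW = pointwise(2)[OF ruled skew, folded dl_def]
  show ?thesis unfolding dl_def[symmetric]
  proof
    assume T: "tcheb_tangential_curved_asym s1 s2 e e1 e2 f g I J"
    have coef: "g u * rs_kappa e e1 e2 u = 0 \<and> 2 * dl u * deriv g u = 0 \<and>
      2 * dl u * deriv f u - deriv dl u * f u + g u * rs_kappa e e1 e2 u * (dl u)\<^sup>2
        - g u * dl u * (s1 u \<bullet> e u) = 0" if uI: "u \<in> I" for u
    proof (rule quad_zero[OF J])
      fix v assume "v \<in> J"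
      then have "cross3 (rs_Tvec s1 s2 e e1 e2 f g u v) (rs_asym_tangent s1 s2 e e1 e2 u v) = 0"
        using T uI unfolding tcheb_tangential_curved_asym_def by blast
      then show "g u * rs_kappa e e1 e2 u * v\<^sup>2 + 2 * dl u * deriv g u * v +
         (2 * dl u * deriv f u - deriv dl u * f u + g u * rs_kappa e e1 e2 u * (dl u)\<^sup>2
          - g u * dl u * (s1 u \<bullet> e u)) = 0"
        using PW[OF uI fD[OF uI] gD[OF uI], of v] by simp
    qed
    have g0: "\<And>u. u \<in> I \<Longrightarrow> (g has_field_derivative 0) (at u within I)"
    proof -
      fix u assume uI: "u \<in> I"
      have "deriv g u = 0" using coef[OF uI] d0[OF uI] by simp
      then show "(g has_field_derivative 0) (at u within I)"
        using gD[OF uI] by (simp add: has_field_derivative_at_within)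
    qed
    obtain c1 where c1: "\<forall>u\<in>I. g u = c1"
      using has_field_derivative_zero_constant[OF is_interval_convex[OF ivI] g0] by blast
    have c10: "c1 \<noteq> 0" using g_nz c1 by auto
    have kap: "\<forall>u\<in>I. rs_kappa e e1 e2 u = 0" using coef c1 c10 by simp
    define F where "F = (\<lambda>x. 2 / c1 * (f x / sqrt \<bar>dl x\<bar>))"
    have FD: "(F has_real_derivative (sqrt \<bar>dl u\<bar> * rs_lambda s1 e u)) (at u)" if uI: "u \<in> I" for u
    proof -
      have sn: "sqrt \<bar>dl u\<bar> \<noteq> 0" using S[OF uI] by simp
      have "(F has_real_derivative 2 / c1 * ((deriv f u * sqrt \<bar>dl u\<bar> -
          f u * ((dl u * deriv dl u / \<bar>dl u\<bar>) / (2 * sqrt \<bar>dl u\<bar>))) / (sqrt \<bar>dl u\<bar>)\<^sup>2)) (at u)"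
        unfolding F_def
        by (rule DERIV_cmult[OF quot_deriv[OF fD[OF uI] sqrt_abs_deriv[OF dD[OF uI] d0[OF uI]] sn]])
      moreover have "2 / c1 * ((deriv f u * sqrt \<bar>dl u\<bar> -
          f u * ((dl u * deriv dl u / \<bar>dl u\<bar>) / (2 * sqrt \<bar>dl u\<bar>))) / (sqrt \<bar>dl u\<bar>)\<^sup>2)
          = sqrt \<bar>dl u\<bar> * ((s1 u \<bullet> e u) / \<bar>dl u\<bar>)"
      proof (rule F_alg1[OF c10 d0[OF uI]])
        show "0 < sqrt \<bar>dl u\<bar>" "(sqrt \<bar>dl u\<bar>)\<^sup>2 = \<bar>dl u\<bar>" using S[OF uI] by auto
        show "2 * dl u * deriv f u - deriv dl u * f u - c1 * dl u * (s1 u \<bullet> e u) = 0"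
          using coef[OF uI] kap uI c1 by simp
      qed
      ultimately show ?thesis using lam[OF uI] by simp
    qed
    have Ff: "\<forall>u\<in>I. f u = sqrt \<bar>dl u\<bar> * (c1 / 2 * F u + 0)"
      using S c10 unfolding F_def by (simp add: field_simps)
    show "(\<forall>u\<in>I. rs_kappa e e1 e2 u = 0) \<and>
     (\<exists>c1. c1 \<noteq> 0 \<and> (\<forall>u\<in>I. g u = c1) \<and>
        (\<exists>F c2. (\<forall>u\<in>I. (F has_real_derivative (sqrt \<bar>dl u\<bar> * rs_lambda s1 e u)) (at u)) \<and>
                (\<forall>u\<in>I. f u = sqrt \<bar>dl u\<bar> * (c1 / 2 * F u + c2))))"
      using kap c10 c1 FD Ff by blast
  next
    assume R: "(\<forall>u\<in>I. rs_kappa e e1 e2 u = 0) \<and>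
     (\<exists>c1. c1 \<noteq> 0 \<and> (\<forall>u\<in>I. g u = c1) \<and>
        (\<exists>F c2. (\<forall>u\<in>I. (F has_real_derivative (sqrt \<bar>dl u\<bar> * rs_lambda s1 e u)) (at u)) \<and>
                (\<forall>u\<in>I. f u = sqrt \<bar>dl u\<bar> * (c1 / 2 * F u + c2))))"
    then obtain c1 F c2 where kap: "\<forall>u\<in>I. rs_kappa e e1 e2 u = 0" and c1: "\<forall>u\<in>I. g u = c1"
      and FD: "\<forall>u\<in>I. (F has_real_derivative (sqrt \<bar>dl u\<bar> * rs_lambda s1 e u)) (at u)"
      and Ff: "\<forall>u\<in>I. f u = sqrt \<bar>dl u\<bar> * (c1 / 2 * F u + c2)" by blast
    show "tcheb_tangential_curved_asym s1 s2 e e1 e2 f g I J"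
      unfolding tcheb_tangential_curved_asym_def
    proof (intro ballI)
      fix u v assume uI: "u \<in> I" and vJ: "v \<in> J"
      define Sd where "Sd = (dl u * deriv dl u / \<bar>dl u\<bar>) / (2 * sqrt \<bar>dl u\<bar>)"
      define h where "h = c1 / 2 * F u + c2"
      have gd: "(g has_real_derivative 0) (at u)"
        by (rule has_field_derivative_transform_within_open[OF DERIV_const oI uI]) (use c1 in auto)
      have hd: "((\<lambda>x. c1 / 2 * F x + c2) has_real_derivative (c1 / 2 * (sqrt \<bar>dl u\<bar> * rs_lambda s1 e u))) (at u)"
        using DERIV_add[OF DERIV_cmult[OF FD[rule_format, OF uI], of "c1 / 2"] DERIV_const[of c2]] by simp
      have "((\<lambda>x. sqrt \<bar>dl x\<bar> * (c1 / 2 * F x + c2)) has_real_derivative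
          (Sd * h + c1 / 2 * (sqrt \<bar>dl u\<bar> * rs_lambda s1 e u) * sqrt \<bar>dl u\<bar>)) (at u)"
        using DERIV_mult[OF sqrt_abs_deriv[OF dD[OF uI] d0[OF uI]] hd] unfolding Sd_def h_def .
      then have fd: "(f has_real_derivative
          (Sd * h + c1 / 2 * (sqrt \<bar>dl u\<bar> * rs_lambda s1 e u) * sqrt \<bar>dl u\<bar>)) (at u)"
        by (rule has_field_derivative_transform_within_open[OF _ oI uI]) (use Ff in auto)
      have "2 * dl u * (Sd * h + sqrt \<bar>dl u\<bar> * (c1 / 2 * (sqrt \<bar>dl u\<bar> * ((s1 u \<bullet> e u) / \<bar>dl u\<bar>))))
          - deriv dl u * (sqrt \<bar>dl u\<bar> * h) - c1 * dl u * (s1 u \<bullet> e u) = 0"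
        unfolding Sd_def by (rule F_alg2[OF d0[OF uI]]) (use S[OF uI] in auto)
      then show "cross3 (rs_Tvec s1 s2 e e1 e2 f g u v) (rs_asym_tangent s1 s2 e e1 e2 u v) = 0"
        using PW[OF uI fd gd, of v] kap uI c1 Ff lam[OF uI] unfolding h_def
        by (simp add: algebra_simps)
    qed
  qed
qed


end
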